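(* Let $k\ge1$, $\beta\ge1$ integers, and consider weighted $k$-server on a uniform metric space $S$ with $n_{k-1}+1$ points and server weights $1,\beta,\ldots,\beta^{k-1}$, from an arbitrary initial configuration. Then the expected optimal (offline) cost of serving the random request sequence generated by $\mathsf{adversary}(k)$ is at most $\beta^{k-1}+\big((n_{k-1}+1)\cdot H(n_{k-1}+1)-1\big)\cdot c_{k-1}$, where $c_0=0$ and $c_\ell=\beta^{\ell-1}+\beta\cdot(\lceil n_{\ell-1}/2\rceil+1)\cdot c_{\ell-1}$ for $\ell>0$.
   Context: $H(n)=\sum_{i=1}^n1/i$. The sequence $n_0,n_1,\ldots$ is defined by $n_0=1$ and $n_i=\left(\lceil n_{i-1}/2\rceil+1\right)\left(\lfloor n_{i-1}/2\rfloor+1\right)$ for $i>0$. Weighted $k$-server on a uniform metric: $k$ servers with given weights sit at points; each requested point must be occupied by a server after serving it; moving a server of weight $w$ to a different point costs $w$; the optimal offline cost is the minimum cost of serving the whole (known) sequence. For every $\ell\ge1$ and every set $P$ with $|P|=n_\ell$, fix a set system $\mathcal{Q}(\ell,P)\subseteq 2^P$ consisting of $\lceil n_{\ell-1}/2\rceil+1$ sets each of size $n_{\ell-1}$, such that every $p\in P$ is missed by some set of $\mathcal{Q}(\ell,P)$, and for every $p\in P$ there is $q\in P$ with every set of $\mathcal{Q}(\ell,P)$ containing $p$ or $q$ (such systems exist). The procedure $\mathsf{strategy}(\ell,P)$ (with $|P|=n_\ell$) is: if $\ell=0$, request the unique point of $P$; if $\ell>0$, repeat $\beta\cdot(\lceil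 n_{\ell-1}/2\rceil+1)$ times: pick $P'$ uniformly at random from $\mathcal{Q}(\ell,P)$, independently of all previous random choices, and run $\mathsf{strategy}(\ell-1,P')$. The procedure $\mathsf{adversary}(k)$ on $S$ ($|S|=n_{k-1}+1$, all points initially unmarked) is: repeatedly pick a point $p$ uniformly at random from $S$ (independently) and mark it; if some point of $S$ is still unmarked, run $\mathsf{strategy}(k-1,S\setminus\{p\})$ and continue; otherwise stop. *)

theory Defs
  imports "HOL-Probability.Probability"
begin

fun nseq :: "nat \<Rightarrow> nat" where
  "nseq 0 = 1"
| "nseq (Suc i) = ((nseq i + 1) div 2 + 1) * (nseq i div 2 + 1)"

fun cseq :: "nat \<Rightarrow> nat \<Rightarrow> real" where
  "cseq \<beta> 0 = 0"
| "cseq \<beta> (Suc l) = real \<beta> ^ l + real \<beta> * real ((nseq l + 1) div 2 + 1) * cseq \<beta> l"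

(* weighted k-server on the uniform metric on S; servers 0..<k with weights w i.
   A configuration is a map from server indices to points (only i < k matters). *)
definition move_cost :: "nat \<Rightarrow> (nat \<Rightarrow> real) \<Rightarrow> (nat \<Rightarrow> 'a) \<Rightarrow> (nat \<Rightarrow> 'a) \<Rightarrow> real" where
  "move_cost k w c c' = (\<Sum>i<k. if c i = c' i then 0 else w i)"

fun path_cost :: "nat \<Rightarrow> (nat \<Rightarrow> real) \<Rightarrow> (nat \<Rightarrow> 'a) \<Rightarrow> (nat \<Rightarrow> 'a) list \<Rightarrow> real" where
  "path_cost k w c0 [] = 0"
| "path_cost k w c0 (c # cs) = move_cost k w c0 c + path_cost k w c cs"

definition valid_schedule :: "nat \<Rightarrow> 'a set \<Rightarrow> 'a list \<Rightarrow> (nat \<Rightarrow> 'a) list \<Rightarrow> bool" where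
  "valid_schedule k S rs cs \<longleftrightarrow> length cs = length rs \<and>
     (\<forall>j < length rs. (\<forall>i<k. (cs ! j) i \<in> S) \<and> (\<exists>i<k. (cs ! j) i = rs ! j))"

definition wks_opt :: "nat \<Rightarrow> (nat \<Rightarrow> real) \<Rightarrow> 'a set \<Rightarrow> (nat \<Rightarrow> 'a) \<Rightarrow> 'a list \<Rightarrow> real" where
  "wks_opt k w S c0 rs = Inf {path_cost k w c0 cs | cs. valid_schedule k S rs cs}"

fun rep_pmf :: "nat \<Rightarrow> 'a list pmf \<Rightarrow> 'a list pmf" where
  "rep_pmf 0 D = return_pmf []"
| "rep_pmf (Suc m) D = bind_pmf D (\<lambda>x. map_pmf (\<lambda>y. x @ y) (rep_pmf m D))"

definition set_systems_ok :: "(nat \<Rightarrow> 'a set \<Rightarrow> 'a set set) \<Rightarrow> bool" where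
  "set_systems_ok Q \<longleftrightarrow> (\<forall>l\<ge>1. \<forall>P. finite P \<and> card P = nseq l \<longrightarrow>
      Q l P \<subseteq> Pow P \<and>
      card (Q l P) = (nseq (l - 1) + 1) div 2 + 1 \<and>
      (\<forall>A\<in>Q l P. card A = nseq (l - 1)) \<and>
      (\<forall>p\<in>P. \<exists>A\<in>Q l P. p \<notin> A) \<and>
      (\<forall>p\<in>P. \<exists>q\<in>P. \<forall>A\<in>Q l P. p \<in> A \<or> q \<in> A))"

primrec strategy :: "nat \<Rightarrow> (nat \<Rightarrow> 'a set \<Rightarrow> 'a set set) \<Rightarrow> nat \<Rightarrow> 'a set \<Rightarrow> 'a list pmf" where
  "strategy \<beta> Q 0 P = return_pmf [the_elem P]"
| "strategy \<beta> Q (Suc l) P =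
     rep_pmf (\<beta> * ((nseq l + 1) div 2 + 1))
       (bind_pmf (pmf_of_set (Q (Suc l) P)) (\<lambda>P'. strategy \<beta> Q l P'))"

definition adv_round :: "nat \<Rightarrow> (nat \<Rightarrow> 'a set \<Rightarrow> 'a set set) \<Rightarrow> nat \<Rightarrow> 'a set \<Rightarrow> ('a \<times> 'a list) pmf" where
  "adv_round \<beta> Q k S = bind_pmf (pmf_of_set S)
     (\<lambda>p. map_pmf (\<lambda>\<sigma>. (p, \<sigma>)) (strategy \<beta> Q (k - 1) (S - {p})))"

(* the round (0-based) in which the last unmarked point gets marked *)
definition adv_stop :: "'a set \<Rightarrow> ('a \<times> 'a list) stream \<Rightarrow> nat" where
  "adv_stop S \<omega> = (LEAST t. S \<subseteq> (\<lambda>j. fst (\<omega> !! j)) ` {..t})"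

(* requests issued: strategy runs of all rounds before the stopping round *)
definition adv_requests :: "'a set \<Rightarrow> ('a \<times> 'a list) stream \<Rightarrow> 'a list" where
  "adv_requests S \<omega> = concat (map (\<lambda>j. snd (\<omega> !! j)) [0..<adv_stop S \<omega>])"

end

theory Submission
  imports Defs
begin

definition lconf :: "(nat \<Rightarrow> 'a) \<Rightarrow> (nat \<Rightarrow> 'a) list \<Rightarrow> (nat \<Rightarrow> 'a)" where
  "lconf c cs = (if cs = [] then c else last cs)"

lemma lconf_append: "lconf c (cs1 @ cs2) = lconf (lconf c cs1) cs2"
  by (auto simp: lconf_def)

lemma path_cost_append:
  "path_cost k w c (cs1 @ cs2) = path_cost k w c cs1 + path_cost k w (lconf c cs1) cs2"
  by (induction cs1 arbitrary: c) (auto simp: lconf_def)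

lemma valid_append:
  assumes "valid_schedule k S rs1 cs1" "valid_schedule k S rs2 cs2"
  shows "valid_schedule k S (rs1 @ rs2) (cs1 @ cs2)"
  using assms unfolding valid_schedule_def
  by (auto simp: nth_append)

lemma move_cost_nonneg:
  assumes "\<And>i. w i \<ge> 0" shows "move_cost k w a b \<ge> 0"
  unfolding move_cost_def using assms by (intro sum_nonneg) auto

lemma path_cost_nonneg:
  assumes "\<And>i. w i \<ge> 0" shows "path_cost k w c cs \<ge> 0"
  using assms by (induction cs arbitrary: c) (auto intro!: add_nonneg_nonneg move_cost_nonneg)

lemma move_cost_tri:
  assumes "\<And>i. w i \<ge> 0"
  shows "move_cost k w a c \<le> move_cost k w a b + move_cost k w b c"
  unfolding move_cost_def sum.distrib[symmetric] using assms
  by (intro sum_mono) auto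

lemma path_cost_pre:
  assumes "\<And>i. w i \<ge> 0"
  shows "path_cost k w c cs \<le> move_cost k w c c1 + path_cost k w c1 cs"
proof (cases cs)
  case Nil then show ?thesis using move_cost_nonneg[OF assms] by simp
next
  case (Cons d ds) then show ?thesis using move_cost_tri[OF assms, where a=c and b=c1 and c=d and k=k] by simp
qed

lemma move_cost_upd:
  assumes "\<And>i. w i \<ge> 0"
  shows "move_cost k w c (c(l := q)) \<le> w l"
proof -
  have "move_cost k w c (c(l := q)) \<le> (\<Sum>i<k. if i = l then w l else 0)"
    unfolding move_cost_def using assms by (intro sum_mono) auto
  also have "\<dots> \<le> w l" using assms by (simp add: sum.delta)
  finally show ?thesis .
qed

lemma set_rep_pmf:
  "\<sigma> \<in> set_pmf (rep_pmf (Suc m) D) \<Longrightarrow> \<exists>x y. x \<in> set_pmf D \<and> y \<in> set_pmf (rep_pmf m D) \<and> \<sigma> = x @ y"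
  by auto

lemma cseq_nonneg: "cseq \<beta> l \<ge> 0"
  by (induction l) auto

lemma strat_serve:
  assumes Qok: "set_systems_ok Q"
  shows "finite P \<Longrightarrow> card P = nseq l \<Longrightarrow> P \<subseteq> S \<Longrightarrow> \<sigma> \<in> set_pmf (strategy \<beta> Q l P)
    \<Longrightarrow> q \<in> P \<Longrightarrow> l \<le> i \<Longrightarrow> i < k \<Longrightarrow> c i = q \<Longrightarrow> (\<forall>j<k. c j \<in> S) \<Longrightarrow>
    \<exists>cs. valid_schedule k S \<sigma> cs \<and> path_cost k (\<lambda>i. real \<beta> ^ i) c cs \<le> cseq \<beta> l
       \<and> (\<forall>j. l \<le> j \<longrightarrow> j < k \<longrightarrow> lconf c cs j = c j) \<and> (\<forall>j<k. lconf c cs j \<in> S)"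
proof (induction l arbitrary: P \<sigma> q i c)
  case 0
  then obtain x where Px: "P = {x}" by (metis card_1_singletonE nseq.simps(1))
  then have "q = x" "\<sigma> = [x]" using 0 by auto
  then show ?case using 0
    by (intro exI[of _ "[c]"]) (auto simp: valid_schedule_def lconf_def move_cost_def)
next
  case (Suc l)
  let ?w = "\<lambda>i. real \<beta> ^ i"
  note op = Suc.prems
  note oIH = Suc.IH
  define QS where "QS = Q (Suc l) P"
  have ok: "QS \<subseteq> Pow P" "card QS = (nseq l + 1) div 2 + 1" "\<forall>A\<in>QS. card A = nseq l"
     "\<forall>p\<in>P. \<exists>q\<in>P. \<forall>A\<in>QS. p \<in> A \<or> q \<in> A"
    using Qok Suc.prems(1,2) unfolding set_systems_ok_def QS_def by (auto dest!: spec[of _ "Suc l"])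
  have QSfin: "finite QS" "QS \<noteq> {}" using ok(2) card.infinite by fastforce+
  obtain q' where q': "q' \<in> P" "\<forall>A\<in>QS. q \<in> A \<or> q' \<in> A" using ok(4) Suc.prems(5) by blast
  define c1 where "c1 = c(l := q')"
  define D where "D = bind_pmf (pmf_of_set QS) (\<lambda>P'. strategy \<beta> Q l P')"
  have lk: "l < k" using Suc.prems by linarith
  have inner: "\<And>\<sigma> d. \<sigma> \<in> set_pmf (rep_pmf m D) \<Longrightarrow> (\<forall>j<k. d j \<in> S) \<Longrightarrow>
      (\<forall>j. l \<le> j \<longrightarrow> j < k \<longrightarrow> d j = c1 j) \<Longrightarrow>
      \<exists>cs. valid_schedule k S \<sigma> cs \<and> path_cost k ?w d cs \<le> real m * cseq \<beta> l
       \<and> (\<forall>j. l \<le> j \<longrightarrow> j < k \<longrightarrow> lconf d cs j = c1 j) \<and> (\<forall>j<k. lconf d cs j \<in> S)" for m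
  proof (induction m)
    case 0
    then show ?case by (intro exI[of _ "[]"]) (auto simp: valid_schedule_def lconf_def)
  next
    case (Suc m \<sigma> d)
    obtain x y where xy: "x \<in> set_pmf D" "y \<in> set_pmf (rep_pmf m D)" "\<sigma> = x @ y"
      using set_rep_pmf[OF Suc.prems(1)] by blast
    obtain A where A: "A \<in> QS" "x \<in> set_pmf (strategy \<beta> Q l A)"
      using xy(1) QSfin unfolding D_def by auto
    have AP: "A \<subseteq> P" using A ok(1) by auto
    have Afin: "finite A" using AP op(1) finite_subset by blast
    have "\<exists>qq ii. qq \<in> A \<and> l \<le> ii \<and> ii < k \<and> d ii = qq"
    proof (cases "q \<in> A")
      case True
      then show ?thesis using Suc.prems(3) op by (intro exI[of _ q] exI[of _ i]) (auto simp: c1_def)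
    next
      case False
      then have "q' \<in> A" using q' A by auto
      then show ?thesis using Suc.prems(3) lk by (intro exI[of _ q'] exI[of _ l]) (auto simp: c1_def)
    qed
    then obtain qq ii where qq: "qq \<in> A" "l \<le> ii" "ii < k" "d ii = qq" by blast
    obtain cs1 where cs1: "valid_schedule k S x cs1" "path_cost k ?w d cs1 \<le> cseq \<beta> l"
      "\<forall>j. l \<le> j \<longrightarrow> j < k \<longrightarrow> lconf d cs1 j = d j" "\<forall>j<k. lconf d cs1 j \<in> S"
      using oIH[OF Afin _ _ A(2) qq(1) qq(2) qq(3) qq(4) Suc.prems(2)] ok(3) A(1) AP op(3)
      by blast
    obtain cs2 where cs2: "valid_schedule k S y cs2" "path_cost k ?w (lconf d cs1) cs2 \<le> real m * cseq \<beta> l"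
      "\<forall>j. l \<le> j \<longrightarrow> j < k \<longrightarrow> lconf (lconf d cs1) cs2 j = c1 j" "\<forall>j<k. lconf (lconf d cs1) cs2 j \<in> S"
      using Suc.IH[OF xy(2), of "lconf d cs1"] cs1(3,4) Suc.prems(3) by force
    show ?case
      using cs1 cs2 xy(3)
      by (intro exI[of _ "cs1 @ cs2"])
         (auto simp: valid_append path_cost_append lconf_append algebra_simps)
  qed
  have c1S: "\<forall>j<k. c1 j \<in> S" using Suc.prems q' by (auto simp: c1_def)
  obtain cs where cs: "valid_schedule k S \<sigma> cs"
    "path_cost k ?w c1 cs \<le> real (\<beta> * ((nseq l + 1) div 2 + 1)) * cseq \<beta> l"
    "\<forall>j. l \<le> j \<longrightarrow> j < k \<longrightarrow> lconf c1 cs j = c1 j" "\<forall>j<k. lconf c1 cs j \<in> S"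
    using inner[of \<sigma> "\<beta> * ((nseq l + 1) div 2 + 1)" c1] Suc.prems(4) c1S
    unfolding D_def QS_def by auto
  have "path_cost k ?w c cs \<le> move_cost k ?w c c1 + path_cost k ?w c1 cs"
    by (rule path_cost_pre) simp
  also have "move_cost k ?w c c1 \<le> real \<beta> ^ l"
    unfolding c1_def by (rule move_cost_upd[of ?w, simplified])
  finally have cost: "path_cost k ?w c cs \<le> cseq \<beta> (Suc l)"
    using cs(2) by (simp add: algebra_simps)
  have "\<forall>j. Suc l \<le> j \<longrightarrow> j < k \<longrightarrow> lconf c cs j = c j"
    using cs(3) by (auto simp: lconf_def c1_def split: if_splits)
  moreover have "\<forall>j<k. lconf c cs j \<in> S"
    using cs(4) Suc.prems by (auto simp: lconf_def)
  ultimately show ?case using cs(1) cost by blast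
qed

lemma adv_round_supp:
  assumes "finite S" "S \<noteq> {}" "x \<in> set_pmf (adv_round \<beta> Q k S)"
  shows "fst x \<in> S \<and> snd x \<in> set_pmf (strategy \<beta> Q (k - 1) (S - {fst x}))"
  using assms unfolding adv_round_def by auto

lemma adv_det:
  assumes k1: "k \<ge> 1" and fin: "finite S" and cS: "card S = nseq (k - 1) + 1"
    and Qok: "set_systems_ok Q" and c0S: "\<forall>i<k. c0 i \<in> S"
    and supp: "\<forall>j. \<omega> !! j \<in> set_pmf (adv_round \<beta> Q k S)"
  shows "wks_opt k (\<lambda>i. real \<beta> ^ i) S c0 (adv_requests S \<omega>)
           \<le> real \<beta> ^ (k - 1) + real (adv_stop S \<omega>) * cseq \<beta> (k - 1)"
proof -
  let ?w = "\<lambda>i. real \<beta> ^ i"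
  let ?m = "adv_stop S \<omega>"
  let ?C = "cseq \<beta> (k - 1)"
  have Sne: "S \<noteq> {}" using cS by auto
  have "\<exists>q\<in>S. \<forall>j<?m. fst (\<omega> !! j) \<noteq> q"
  proof (cases ?m)
    case 0 then show ?thesis using Sne by auto
  next
    case (Suc m)
    have "\<not> S \<subseteq> (\<lambda>j. fst (\<omega> !! j)) ` {..m}"
    proof (cases "\<exists>t. S \<subseteq> (\<lambda>j. fst (\<omega> !! j)) ` {..t}")
      case True
      have "m < (LEAST t. S \<subseteq> (\<lambda>j. fst (\<omega> !! j)) ` {..t})"
        using Suc unfolding adv_stop_def by simp
      then show ?thesis by (rule not_less_Least)
    next
      case False then show ?thesis by blast
    qed
    then obtain q where "q \<in> S" "q \<notin> (\<lambda>j. fst (\<omega> !! j)) ` {..m}" by blast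
    then show ?thesis using Suc by (intro bexI[of _ q]) (auto simp: less_Suc_eq_le)
  qed
  then obtain q where q: "q \<in> S" "\<forall>j<?m. fst (\<omega> !! j) \<noteq> q" by blast
  have lst: "\<And>js d. (\<forall>j\<in>set js. j < ?m) \<Longrightarrow> (\<forall>j<k. d j \<in> S) \<Longrightarrow> d (k - 1) = q \<Longrightarrow>
     \<exists>cs. valid_schedule k S (concat (map (\<lambda>j. snd (\<omega> !! j)) js)) cs
        \<and> path_cost k ?w d cs \<le> real (length js) * ?C
        \<and> lconf d cs (k - 1) = q \<and> (\<forall>j<k. lconf d cs j \<in> S)"
  proof -
    fix js d
    show "(\<forall>j\<in>set js. j < ?m) \<Longrightarrow> (\<forall>j<k. d j \<in> S) \<Longrightarrow> d (k - 1) = q \<Longrightarrow>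
     \<exists>cs. valid_schedule k S (concat (map (\<lambda>j. snd (\<omega> !! j)) js)) cs
        \<and> path_cost k ?w d cs \<le> real (length js) * ?C
        \<and> lconf d cs (k - 1) = q \<and> (\<forall>j<k. lconf d cs j \<in> S)"
    proof (induction js arbitrary: d)
      case Nil then show ?case by (intro exI[of _ "[]"]) (auto simp: valid_schedule_def lconf_def)
    next
      case (Cons j js d)
      define p where "p = fst (\<omega> !! j)"
      have pS: "p \<in> S" and st: "snd (\<omega> !! j) \<in> set_pmf (strategy \<beta> Q (k - 1) (S - {p}))"
        using adv_round_supp[OF fin Sne supp[rule_format, of j]] unfolding p_def by auto
      have qp: "q \<in> S - {p}" using q Cons.prems(1) unfolding p_def by auto
      have cP: "card (S - {p}) = nseq (k - 1)" using cS pS fin by simp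
      obtain cs1 where cs1: "valid_schedule k S (snd (\<omega> !! j)) cs1"
        "path_cost k ?w d cs1 \<le> ?C" "\<forall>i. k - 1 \<le> i \<longrightarrow> i < k \<longrightarrow> lconf d cs1 i = d i"
        "\<forall>i<k. lconf d cs1 i \<in> S"
        using strat_serve[OF Qok, where l="k - 1" and i="k - 1" and k=k and c=d and P="S - {p}" and S=S and q=q, OF _ cP _ st qp] fin k1 Cons.prems by auto
      have l1: "lconf d cs1 (k - 1) = q" using cs1(3) Cons.prems k1 by auto
      obtain cs2 where cs2: "valid_schedule k S (concat (map (\<lambda>j. snd (\<omega> !! j)) js)) cs2"
        "path_cost k ?w (lconf d cs1) cs2 \<le> real (length js) * ?C"
        "lconf (lconf d cs1) cs2 (k - 1) = q" "\<forall>i<k. lconf (lconf d cs1) cs2 i \<in> S"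
        using Cons.IH[of "lconf d cs1"] Cons.prems cs1(4) l1 by auto
      show ?case using cs1 cs2
        by (intro exI[of _ "cs1 @ cs2"])
           (auto simp: valid_append path_cost_append lconf_append algebra_simps)
    qed
  qed
  define c1 where "c1 = c0(k - 1 := q)"
  have c1S: "\<forall>j<k. c1 j \<in> S" using c0S q by (auto simp: c1_def)
  obtain cs where cs: "valid_schedule k S (adv_requests S \<omega>) cs"
     "path_cost k ?w c1 cs \<le> real ?m * ?C"
    using lst[of "[0..<?m]" c1] c1S unfolding adv_requests_def by (auto simp: c1_def)
  have "path_cost k ?w c0 cs \<le> move_cost k ?w c0 c1 + path_cost k ?w c1 cs"
    by (rule path_cost_pre) simp
  also have "move_cost k ?w c0 c1 \<le> real \<beta> ^ (k - 1)"
    unfolding c1_def by (rule move_cost_upd[of ?w, simplified])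
  finally have pc: "path_cost k ?w c0 cs \<le> real \<beta> ^ (k - 1) + real ?m * ?C" using cs(2) by simp
  have "wks_opt k ?w S c0 (adv_requests S \<omega>) \<le> path_cost k ?w c0 cs"
    unfolding wks_opt_def
  proof (rule cInf_lower)
    show "path_cost k ?w c0 cs \<in> {path_cost k ?w c0 cs |cs. valid_schedule k S (adv_requests S \<omega>) cs}"
      using cs(1) by blast
    show "bdd_below {path_cost k ?w c0 cs |cs. valid_schedule k S (adv_requests S \<omega>) cs}"
      by (rule bdd_belowI[of _ 0]) (auto intro: path_cost_nonneg)
  qed
  then show ?thesis using pc by linarith
qed


fun Fl :: "'a set \<Rightarrow> 'a set \<Rightarrow> ('a \<times> 'b) list \<Rightarrow> nat" where
  "Fl S M [] = 0"
| "Fl S M (x # xs) = (if S \<subseteq> M \<union> {fst x} then 0 else Suc (Fl S (M \<union> {fst x}) xs))"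

lemma mk_Suc: "(\<lambda>j. fst (\<omega> !! j)) ` {..Suc t} = insert (fst (shd \<omega>)) ((\<lambda>j. fst (stl \<omega> !! j)) ` {..t})"
  by (simp add: atMost_Suc_eq_insert_0 image_image)

lemma mk_0: "(\<lambda>j. fst (\<omega> !! j)) ` {..0} = {fst (shd \<omega>)}"
  by simp

lemma Fl_closed:
  "Fl S M (stake n \<omega>) = (if \<exists>t<n. S \<subseteq> M \<union> (\<lambda>j. fst (\<omega> !! j)) ` {..t}
      then (LEAST t. S \<subseteq> M \<union> (\<lambda>j. fst (\<omega> !! j)) ` {..t}) else n)"
proof (induction n arbitrary: M \<omega>)
  case 0 then show ?case by simp
next
  case (Suc n)
  define h where "h = fst (shd \<omega>)"
  define P where "P t = (S \<subseteq> M \<union> (\<lambda>j. fst (\<omega> !! j)) ` {..t})" for t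
  define P' where "P' t = (S \<subseteq> (M \<union> {h}) \<union> (\<lambda>j. fst (stl \<omega> !! j)) ` {..t})" for t
  have PS: "P (Suc t) = P' t" for t unfolding P_def P'_def mk_Suc h_def by auto
  have P0: "P 0 = (S \<subseteq> M \<union> {h})" unfolding P_def h_def by simp
  show ?case
  proof (cases "P 0")
    case True
    then have "(LEAST t. P t) = 0" by (simp add: Least_eq_0)
    then show ?thesis using True P0 unfolding P_def[symmetric] h_def by auto
  next
    case False
    have ex: "(\<exists>t<Suc n. P t) = (\<exists>t<n. P' t)"
      using False PS by (metis less_Suc_eq_0_disj not_less_eq)
    have "Fl S M (stake (Suc n) \<omega>) = Suc (Fl S (M \<union> {h}) (stake n (stl \<omega>)))"
      using False P0 h_def by simp
    also have "\<dots> = Suc (if \<exists>t<n. P' t then (LEAST t. P' t) else n)"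
      unfolding P'_def by (rule arg_cong[where f=Suc], rule Suc.IH)
    also have "\<dots> = (if \<exists>t<Suc n. P t then (LEAST t. P t) else Suc n)"
    proof (cases "\<exists>t<n. P' t")
      case True
      then obtain t where "P (Suc t)" using PS by auto
      then have "(LEAST t. P t) = Suc (LEAST t. P (Suc t))" using False by (rule Least_Suc)
      then show ?thesis using True ex PS by simp
    next
      case False then show ?thesis unfolding ex by (simp only: if_not_P[OF False] if_False)
    qed
    finally show ?thesis unfolding P_def .
  qed
qed

lemma adv_stop_le: "\<exists>n. adv_stop S \<omega> \<le> Fl S {} (stake n \<omega>)"
proof (cases "\<exists>t. S \<subseteq> (\<lambda>j. fst (\<omega> !! j)) ` {..t}")
  case True
  then obtain t where "S \<subseteq> (\<lambda>j. fst (\<omega> !! j)) ` {..t}" by blast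
  then have e: "\<exists>t'<Suc t. S \<subseteq> {} \<union> (\<lambda>j. fst (\<omega> !! j)) ` {..t'}" by auto
  have "Fl S {} (stake (Suc t) \<omega>) = (LEAST t. S \<subseteq> {} \<union> (\<lambda>j. fst (\<omega> !! j)) ` {..t})"
    by (subst Fl_closed) (rule if_P[OF e])
  then show ?thesis unfolding adv_stop_def Un_empty_left by (intro exI[of _ "Suc t"]) simp
next
  case False
  then have e: "\<not> (\<exists>t'<adv_stop S \<omega>. S \<subseteq> {} \<union> (\<lambda>j. fst (\<omega> !! j)) ` {..t'})" by auto
  have "Fl S {} (stake (adv_stop S \<omega>) \<omega>) = adv_stop S \<omega>"
    by (subst Fl_closed) (rule if_not_P[OF e])
  then show ?thesis by (intro exI[of _ "adv_stop S \<omega>"]) simp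
qed

lemma Fl_mono: "Fl S M (stake n \<omega>) \<le> Fl S M (stake (Suc n) \<omega>)"
  by (induction n arbitrary: M \<omega>) auto

definition iota :: "'a set \<Rightarrow> ('a \<times> 'b) \<Rightarrow> nat option" where
  "iota S x = (if fst x \<in> S then Some (to_nat_on S (fst x)) else None)"

lemma Fl_cong:
  assumes "finite S"
  shows "map (iota S) xs = map (iota S) ys \<Longrightarrow> M \<inter> S = M' \<inter> S \<Longrightarrow> Fl S M xs = Fl S M' ys"
proof (induction xs arbitrary: ys M M')
  case Nil then show ?case by simp
next
  case (Cons x xs)
  then obtain y ys' where ys: "ys = y # ys'" by (cases ys) auto
  have io: "iota S x = iota S y" "map (iota S) xs = map (iota S) ys'" using Cons.prems ys by auto
  have inj: "inj_on (to_nat_on S) S" using assms by (intro inj_on_to_nat_on countable_finite)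
  have xy: "(fst x \<in> S) = (fst y \<in> S)" "fst x \<in> S \<Longrightarrow> fst x = fst y"
    using io(1) inj unfolding iota_def by (auto split: if_splits dest: inj_onD)
  have MM: "(M \<union> {fst x}) \<inter> S = (M' \<union> {fst y}) \<inter> S" using Cons.prems(2) xy by auto
  have cov: "(S \<subseteq> M \<union> {fst x}) = (S \<subseteq> M' \<union> {fst y})" using MM by blast
  show ?case using Cons.IH[OF io(2) MM] cov ys by simp
qed

lemma Fl_meas_gen:
  fixes f :: "nat \<Rightarrow> 'c::topological_space"
  assumes "finite S"
  shows "(\<lambda>\<omega>. f (Fl S M (stake n \<omega>))) \<in> borel_measurable (stream_space (measure_pmf (A :: ('a \<times> 'b) pmf)))"
proof -
  define H where "H zs = f (Fl S M (SOME xs :: ('a \<times> 'b) list. map (iota S) xs = zs))" for zs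
  have eq: "(\<lambda>\<omega> :: ('a \<times> 'b) stream. f (Fl S M (stake n \<omega>))) = (\<lambda>\<omega>. H (stake n (smap (iota S) \<omega>)))"
  proof
    fix \<omega> :: "('a \<times> 'b) stream"
    have ex: "\<exists>xs :: ('a \<times> 'b) list. map (iota S) xs = map (iota S) (stake n \<omega>)" by (rule exI[of _ "stake n \<omega>"]) (rule refl)
    have "map (iota S) (SOME xs :: ('a \<times> 'b) list. map (iota S) xs = map (iota S) (stake n \<omega>)) = map (iota S) (stake n \<omega>)"
      using someI_ex[OF ex] .
    then show "f (Fl S M (stake n \<omega>)) = H (stake n (smap (iota S) \<omega>))"
      unfolding H_def stake_smap using Fl_cong[OF assms] by metis
  qed
  have m1: "smap (iota S) \<in> measurable (stream_space (measure_pmf A)) (stream_space (count_space UNIV))"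
    by (rule measurable_smap) simp
  have m2: "(\<lambda>\<omega>. stake n (smap (iota S) \<omega>)) \<in> measurable (stream_space (measure_pmf A)) (count_space UNIV)"
    by (rule measurable_compose[OF m1 measurable_stake])
  show ?thesis unfolding eq
    by (rule measurable_compose[OF m2]) simp
qed

lemmas Fl_meas = Fl_meas_gen[where f="\<lambda>x. ennreal (real x)"]
lemmas Fl_meas_real = Fl_meas_gen[where f="\<lambda>x. real x"]

lemma one_plus_ennreal: "(y::real) \<ge> 1 \<Longrightarrow> 1 + ennreal (y - 1) = ennreal y"
proof -
  assume "y \<ge> 1"
  then have "ennreal 1 + ennreal (y - 1) = ennreal (1 + (y - 1))" by (intro ennreal_plus[symmetric]) auto
  then show ?thesis by simp
qed

lemma harm_ge1: "m \<ge> 1 \<Longrightarrow> (harm m :: real) \<ge> 1"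
proof -
  assume "m \<ge> 1"
  then have "(\<Sum>k\<in>{1..1}. inverse (real k)) \<le> (\<Sum>k\<in>{1..m}. inverse (real k))"
    by (intro sum_mono2) auto
  then show ?thesis by (simp add: harm_def)
qed

lemma coupon:
  assumes fin: "finite S" and ne: "S \<noteq> {}" and marg: "map_pmf fst A = pmf_of_set S"
  shows "M \<subseteq> S \<Longrightarrow> (\<integral>\<^sup>+\<omega>. ennreal (real (Fl S M (stake n \<omega>))) \<partial>stream_space (measure_pmf A))
           \<le> ennreal (real (card S) * harm (card (S - M)) - 1)"
proof (induction n arbitrary: M)
  case 0 then show ?case by simp
next
  case (Suc n M)
  let ?SS = "stream_space (measure_pmf A)"
  let ?N = "card S"
  interpret SS: prob_space ?SS by (rule prob_space.prob_space_stream_space[OF measure_pmf.prob_space_axioms])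
  show ?case
  proof (cases "S \<subseteq> M")
    case True
    then have z: "\<And>\<omega>. Fl S M (stake (Suc n) \<omega>) = 0" by auto
    show ?thesis by (simp only: z) simp
  next
    case False
    define r where "r = card (S - M)"
    have r1: "r \<ge> 1" using False fin r_def by (simp add: Suc_leI card_gt_0_iff)
    have rN: "r \<le> ?N" unfolding r_def using fin by (simp add: card_mono)
    have N1: "?N \<ge> 1" using fin ne by (simp add: Suc_leI card_gt_0_iff)
    have fstS: "fst x \<in> S" if "x \<in> set_pmf A" for x
    proof -
      have "fst x \<in> set_pmf (map_pmf fst A)" using that by simp
      then show ?thesis using marg fin ne by simp
    qed
    define g where "g p = (if p \<in> M then real ?N * harm r else real ?N * harm (r - 1))" for p
    have inner: "(\<integral>\<^sup>+\<omega>. ennreal (real (Fl S M (stake (Suc n) (x ## \<omega>)))) \<partial>?SS) \<le> ennreal (g (fst x))"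
      if x: "x \<in> set_pmf A" for x
    proof -
      define p where "p = fst x"
      have pS: "p \<in> S" using fstS x p_def by simp
      show ?thesis
      proof (cases "S \<subseteq> M \<union> {p}")
        case True
        have pM: "p \<notin> M" using True False by auto
        have "S - M = {p}" using True pM pS by auto
        then have "r = 1" unfolding r_def by simp
        note this pM
        then show ?thesis using True by (simp add: p_def g_def)
      next
        case cov: False
        have "(\<integral>\<^sup>+\<omega>. ennreal (real (Fl S M (stake (Suc n) (x ## \<omega>)))) \<partial>?SS)
            = (\<integral>\<^sup>+\<omega>. 1 + ennreal (real (Fl S (M \<union> {p}) (stake n \<omega>))) \<partial>?SS)"
          using cov by (intro nn_integral_cong) (simp add: p_def ennreal_plus[symmetric] add.commute)
        also have "\<dots> = 1 + (\<integral>\<^sup>+\<omega>. ennreal (real (Fl S (M \<union> {p}) (stake n \<omega>))) \<partial>?SS)"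
          by (subst nn_integral_add) (auto intro: Fl_meas[OF fin] Fl_meas_real[OF fin] simp: SS.emeasure_space_1)
        also have "\<dots> \<le> 1 + ennreal (real ?N * harm (card (S - (M \<union> {p}))) - 1)"
          using Suc.IH[of "M \<union> {p}"] Suc.prems pS by (intro add_left_mono) auto
        also have "\<dots> = ennreal (g (fst x))"
        proof -
          have cc: "card (S - (M \<union> {p})) = (if p \<in> M then r else r - 1)"
          proof (cases "p \<in> M")
            case True
            then have "S - (M \<union> {p}) = S - M" by auto
            then show ?thesis using True unfolding r_def by simp
          next
            case False
            then have "S - (M \<union> {p}) = (S - M) - {p}" by auto
            moreover have "p \<in> S - M" using False pS by auto
            ultimately show ?thesis using False fin unfolding r_def by (simp add: card_Diff_singleton)
          qed
          have ne2: "S - (M \<union> {p}) \<noteq> {}" using cov by auto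
          then have "card (S - (M \<union> {p})) \<ge> 1" using fin by (simp add: Suc_leI card_gt_0_iff)
          then have "real ?N * harm (card (S - (M \<union> {p}))) \<ge> 1"
            using harm_ge1[of "card (S - (M \<union> {p}))"] N1 mult_mono[of 1 "real ?N" 1 "harm (card (S - (M \<union> {p})))"] by simp
          then have "1 + ennreal (real ?N * harm (card (S - (M \<union> {p}))) - 1)
                = ennreal (real ?N * harm (card (S - (M \<union> {p}))))"
            by (rule one_plus_ennreal)
          then show ?thesis using cc by (simp add: g_def p_def)
        qed
        finally show ?thesis .
      qed
    qed
    have "(\<integral>\<^sup>+\<omega>. ennreal (real (Fl S M (stake (Suc n) \<omega>))) \<partial>?SS)
        = (\<integral>\<^sup>+x. (\<integral>\<^sup>+\<omega>. ennreal (real (Fl S M (stake (Suc n) (x ## \<omega>)))) \<partial>?SS) \<partial>measure_pmf A)"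
      by (rule prob_space.nn_integral_stream_space[OF measure_pmf.prob_space_axioms Fl_meas[OF fin]])
    also have "\<dots> \<le> (\<integral>\<^sup>+x. ennreal (g (fst x)) \<partial>measure_pmf A)"
      using inner by (intro nn_integral_mono_AE) (simp add: AE_measure_pmf_iff)
    also have "\<dots> = (\<integral>\<^sup>+p. ennreal (g p) \<partial>measure_pmf (pmf_of_set S))"
      unfolding marg[symmetric] by simp
    also have "\<dots> = (\<Sum>p\<in>S. ennreal (g p)) / of_nat ?N"
      using fin ne by (simp add: nn_integral_pmf_of_set)
    also have "\<dots> = ennreal (sum g S / real ?N)"
    proof -
      have "(\<Sum>p\<in>S. ennreal (g p)) = ennreal (sum g S)"
        by (rule sum_ennreal) (simp add: g_def harm_nonneg)
      then show ?thesis using N1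
        by (simp add: ennreal_of_nat_eq_real_of_nat divide_ennreal sum_nonneg g_def harm_nonneg)
    qed
    also have "sum g S / real ?N = real ?N * harm r - 1"
    proof -
      have split: "sum g S = sum g (S \<inter> M) + sum g (S - M)"
        using fin by (rule sum.Int_Diff)
      have s1: "sum g (S \<inter> M) = real (?N - r) * (real ?N * harm r)"
      proof -
        have "sum g (S \<inter> M) = (\<Sum>p\<in>S \<inter> M. real ?N * harm r)" by (intro sum.cong) (auto simp: g_def)
        moreover have "card (S \<inter> M) = ?N - r"
        proof -
          have "card (S - M) = card S - card (S \<inter> M)" by (rule card_Diff_subset_Int) (use fin in auto)
          moreover have "card (S \<inter> M) \<le> card S" by (rule card_mono) (use fin in auto)
          ultimately show ?thesis unfolding r_def by arith
        qed
        ultimately show ?thesis by simp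
      qed
      have s2: "sum g (S - M) = real r * (real ?N * harm (r - 1))"
      proof -
        have "sum g (S - M) = (\<Sum>p\<in>S - M. real ?N * harm (r - 1))" by (intro sum.cong) (auto simp: g_def)
        then show ?thesis unfolding r_def by simp
      qed
      obtain r' where r': "r = Suc r'" using r1 by (cases r) auto
      have hr: "harm r = harm (r - 1) + inverse (real r)" using r' by (simp add: harm_Suc)
      have "sum g S = real ?N * (real ?N * harm r - 1)"
        unfolding split s1 s2 hr using rN r1 by (simp add: of_nat_diff algebra_simps)
      then show ?thesis using N1 by simp
    qed
    finally show ?thesis unfolding r_def .
  qed
qed


theorem lemma7:
  fixes k \<beta> :: nat and S :: "'a set" and Q :: "nat \<Rightarrow> 'a set \<Rightarrow> 'a set set"
    and c0 :: "nat \<Rightarrow> 'a"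
  assumes "k \<ge> 1" and "\<beta> \<ge> 1"
    and "finite S" and "card S = nseq (k - 1) + 1"
    and "set_systems_ok Q"
    and "\<forall>i<k. c0 i \<in> S"
  shows "(\<integral>\<^sup>+ \<omega>. ennreal (wks_opt k (\<lambda>i. real \<beta> ^ i) S c0 (adv_requests S \<omega>))
            \<partial>stream_space (measure_pmf (adv_round \<beta> Q k S)))
         \<le> ennreal (real \<beta> ^ (k - 1)
              + (real (nseq (k - 1) + 1) * harm (nseq (k - 1) + 1) - 1) * cseq \<beta> (k - 1))"
proof -
  note k1 = assms(1) and fin = assms(3) and cS = assms(4) and Qok = assms(5) and c0S = assms(6)
  define A where "A = adv_round \<beta> Q k S"
  let ?SS = "stream_space (measure_pmf A)"
  interpret SS: prob_space ?SS
    by (rule prob_space.prob_space_stream_space[OF measure_pmf.prob_space_axioms])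
  define a where "a = real \<beta> ^ (k - 1)"
  define C where "C = cseq \<beta> (k - 1)"
  define N where "N = card S"
  define G where "G n (\<omega> :: ('a \<times> 'a list) stream) = ennreal (real (Fl S {} (stake n \<omega>)))" for n \<omega>
  have ne: "S \<noteq> {}" using cS by auto
  have N1: "N \<ge> 1" using cS N_def by simp
  have marg: "map_pmf fst A = pmf_of_set S"
    unfolding A_def adv_round_def by (simp add: map_bind_pmf map_pmf_comp bind_return_pmf')
  have AEs: "AE \<omega> in ?SS. stream_all (\<lambda>x. x \<in> set_pmf A) \<omega>"
    by (rule prob_space.AE_stream_all[OF measure_pmf.prob_space_axioms]) (simp_all add: AE_measure_pmf)
  have C0: "C \<ge> 0" unfolding C_def by (rule cseq_nonneg)
  have mG: "G n \<in> borel_measurable ?SS" for n unfolding G_def by (rule Fl_meas[OF fin])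
  have mSUP: "(\<lambda>\<omega>. SUP n. G n \<omega>) \<in> borel_measurable ?SS"
    by (rule borel_measurable_SUP) (simp_all add: mG)
  have pw: "AE \<omega> in ?SS. ennreal (wks_opt k (\<lambda>i. real \<beta> ^ i) S c0 (adv_requests S \<omega>))
              \<le> ennreal a + ennreal C * (SUP n. G n \<omega>)"
    using AEs
  proof eventually_elim
    case (elim \<omega>)
    have supp: "\<forall>j. \<omega> !! j \<in> set_pmf (adv_round \<beta> Q k S)" using elim unfolding A_def stream_all_def by simp
    have opt: "wks_opt k (\<lambda>i. real \<beta> ^ i) S c0 (adv_requests S \<omega>) \<le> a + real (adv_stop S \<omega>) * C"
      unfolding a_def C_def by (rule adv_det[OF k1 fin cS Qok c0S supp])
    obtain n0 where n0: "adv_stop S \<omega> \<le> Fl S {} (stake n0 \<omega>)" using adv_stop_le by blast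
    have "ennreal (wks_opt k (\<lambda>i. real \<beta> ^ i) S c0 (adv_requests S \<omega>)) \<le> ennreal (a + real (adv_stop S \<omega>) * C)"
      using opt by (rule ennreal_leI)
    also have "\<dots> = ennreal a + ennreal C * ennreal (real (adv_stop S \<omega>))"
      using C0 by (simp add: a_def ennreal_plus ennreal_mult mult.commute)
    also have "ennreal (real (adv_stop S \<omega>)) \<le> G n0 \<omega>"
      unfolding G_def using n0 by (intro ennreal_leI) simp
    also have "G n0 \<omega> \<le> (SUP n. G n \<omega>)" by (rule SUP_upper) simp
    finally show ?case by (simp add: mult_left_mono)
  qed
  have "(\<integral>\<^sup>+ \<omega>. ennreal (wks_opt k (\<lambda>i. real \<beta> ^ i) S c0 (adv_requests S \<omega>)) \<partial>?SS)
      \<le> (\<integral>\<^sup>+ \<omega>. ennreal a + ennreal C * (SUP n. G n \<omega>) \<partial>?SS)"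
    by (rule nn_integral_mono_AE[OF pw])
  also have "\<dots> = ennreal a + ennreal C * (\<integral>\<^sup>+ \<omega>. (SUP n. G n \<omega>) \<partial>?SS)"
    using mSUP by (simp add: nn_integral_add nn_integral_cmult SS.emeasure_space_1)
  also have "(\<integral>\<^sup>+ \<omega>. (SUP n. G n \<omega>) \<partial>?SS) = (SUP n. (\<integral>\<^sup>+ \<omega>. G n \<omega> \<partial>?SS))"
  proof (rule nn_integral_monotone_convergence_SUP[OF _ mG])
    show "incseq G"
      by (rule incseq_SucI, rule le_funI) (unfold G_def, intro ennreal_leI of_nat_mono Fl_mono)
  qed
  also have "\<dots> \<le> ennreal (real N * harm N - 1)"
  proof (rule SUP_least)
    fix n
    show "(\<integral>\<^sup>+ \<omega>. G n \<omega> \<partial>?SS) \<le> ennreal (real N * harm N - 1)"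
      using coupon[OF fin ne marg, of "{}" n] unfolding G_def N_def by simp
  qed
  finally have main: "(\<integral>\<^sup>+ \<omega>. ennreal (wks_opt k (\<lambda>i. real \<beta> ^ i) S c0 (adv_requests S \<omega>)) \<partial>?SS)
      \<le> ennreal a + ennreal C * ennreal (real N * harm N - 1)"
    by (simp add: mult_left_mono add_left_mono)
  have h1: "real N * harm N - 1 \<ge> 0"
    using harm_ge1[of N] N1 mult_mono[of 1 "real N" 1 "harm N"] by simp
  have "ennreal a + ennreal C * ennreal (real N * harm N - 1) = ennreal (a + (real N * harm N - 1) * C)"
    using h1 C0 by (simp add: a_def ennreal_plus ennreal_mult mult.commute)
  then show ?thesis using main unfolding A_def a_def C_def N_def cS by simp
qed

end
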